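(* Let $G$ be an abelian group with $\mathbb{Z}^{(\omega)}\subseteq G\subseteq\mathbb{Z}^\omega$ and $|G|<\mathfrak{p}$. Then $G$ is not weakly $\mathbb{Z}^{(\omega)}$-binding; that is, there is a homomorphism $G\to\mathbb{Z}^{(\omega)}$ that extends to an endomorphism of $\mathbb{Z}^\omega$ and maps $\mathbb{Z}^{(\omega)}$ onto a group of infinite rank.
   Context: $\mathbb{Z}^{\omega}$ is the product of countably many copies of $\mathbb{Z}$; $\mathbb{Z}^{(\omega)}\subseteq\mathbb{Z}^\omega$ is the subgroup of finitely supported sequences. Rank means torsion-free rank. $G$ with $\mathbb{Z}^{(\omega)}\subseteq G\subseteq\mathbb{Z}^\omega$ is weakly $\mathbb{Z}^{(\omega)}$-binding if every homomorphism $G\to\mathbb{Z}^{(\omega)}$ that extends to an endomorphism of $\mathbb{Z}^\omega$ maps $\mathbb{Z}^{(\omega)}$ to a group of finite rank. $\mathfrak{p}$ is the pseudointersection number: the smallest cardinality of a family $\mathcal F$ of subsets of $\omega$ such that every finite subfamily has infinite intersection but there is no infinite $A\subseteq\omega$ with $A\setminus F$ finite for all $F\in\mathcal F$. *)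

theory Defs
  imports Main
begin

text \<open>Z^omega is modelled as the type nat => int (all integer sequences).\<close>

definition fin_supp_seqs :: "(nat \<Rightarrow> int) set" where
  "fin_supp_seqs = {x. finite {n. x n \<noteq> 0}}"

definition is_endo :: "((nat \<Rightarrow> int) \<Rightarrow> (nat \<Rightarrow> int)) \<Rightarrow> bool" where
  "is_endo f \<longleftrightarrow> (\<forall>x y. f (\<lambda>n. x n + y n) = (\<lambda>n. f x n + f y n))"

definition is_subgroup :: "(nat \<Rightarrow> int) set \<Rightarrow> bool" where
  "is_subgroup G \<longleftrightarrow> (\<lambda>n. 0) \<in> G \<and> (\<forall>x\<in>G. \<forall>y\<in>G. (\<lambda>n. x n + y n) \<in> G)
     \<and> (\<forall>x\<in>G. (\<lambda>n. - x n) \<in> G)"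

definition int_lin_indep :: "(nat \<Rightarrow> int) set \<Rightarrow> bool" where
  "int_lin_indep S \<longleftrightarrow> (\<forall>T c. finite T \<longrightarrow> T \<subseteq> S \<longrightarrow>
      (\<lambda>n. \<Sum>x\<in>T. c x * x n) = (\<lambda>n. 0) \<longrightarrow> (\<forall>x\<in>T. c x = 0))"

definition infinite_rank :: "(nat \<Rightarrow> int) set \<Rightarrow> bool" where
  "infinite_rank H \<longleftrightarrow> (\<exists>S\<subseteq>H. infinite S \<and> int_lin_indep S)"

definition has_sfip :: "nat set set \<Rightarrow> bool" where
  "has_sfip F \<longleftrightarrow> (\<forall>E. finite E \<longrightarrow> E \<subseteq> F \<longrightarrow> infinite (\<Inter>E))"

definition has_pseudointersection :: "nat set set \<Rightarrow> bool" where
  "has_pseudointersection F \<longleftrightarrow> (\<exists>A. infinite A \<and> (\<forall>X\<in>F. finite (A - X)))"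

definition card_below_p :: "'a set \<Rightarrow> bool" where
  "card_below_p G \<longleftrightarrow> (\<forall>F. has_sfip F \<and> \<not> has_pseudointersection F \<longrightarrow> (card_of G, card_of F) \<in> ordLess)"

end

theory Submission imports Defs "HOL-Library.Countable" "HOL-Library.Infinite_Set" begin

lemma hom_sol_n:
  "length hs = n \<Longrightarrow> finite I \<Longrightarrow> n < card I \<Longrightarrow> \<exists>c::nat\<Rightarrow>int. (\<forall>i. i\<notin>I \<longrightarrow> c i = 0) \<and> (\<exists>i\<in>I. c i \<noteq> 0)
     \<and> (\<forall>h\<in>set hs. (\<Sum>i\<in>I. c i * h i) = 0)"
proof (induction n arbitrary: hs I)
  case 0
  then obtain i0 where "i0 \<in> I" by (metis card.empty ex_in_conv less_irrefl)
  then show ?case using 0 by (rule_tac x="\<lambda>i. if i = i0 then 1 else 0" in exI) auto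
next
  case (Suc n)
  then obtain g hs' where hs: "hs = g # hs'" "length hs' = n" by (cases hs) auto
  show ?case
  proof (cases "\<forall>i\<in>I. g i = 0")
    case True
    from Suc.IH[of hs' I] Suc.prems hs obtain c where c: "\<forall>i. i\<notin>I \<longrightarrow> c i = 0" "\<exists>i\<in>I. c i \<noteq> 0"
      "\<forall>h\<in>set hs'. (\<Sum>i\<in>I. c i * h i) = 0" by auto
    show ?thesis using c True hs by (rule_tac x=c in exI) auto
  next
    case False
    then obtain i0 where i0: "i0 \<in> I" "g i0 \<noteq> 0" by auto
    define I' where "I' = I - {i0}"
    have fI': "finite I'" using Suc.prems I'_def by auto
    have cI': "n < card I'" using Suc.prems i0 I'_def by auto
    from Suc.IH[of "map (\<lambda>h i. g i0 * h i - g i * h i0) hs'", OF _ fI' cI'] hs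
    obtain d where d: "\<forall>i. i\<notin>I' \<longrightarrow> d i = 0" "\<exists>i\<in>I'. d i \<noteq> 0"
      "\<forall>h\<in>set (map (\<lambda>h i. g i0 * h i - g i * h i0) hs'). (\<Sum>i\<in>I'. d i * h i) = 0"
      by auto
    define c where "c i = (if i = i0 then -(\<Sum>j\<in>I'. d j * g j) else g i0 * d i)" for i
    have key: "(\<Sum>i\<in>I. c i * h i) = (\<Sum>i\<in>I'. d i * (g i0 * h i - g i * h i0))" for h
    proof -
      have "(\<Sum>i\<in>I. c i * h i) = c i0 * h i0 + (\<Sum>i\<in>I'. c i * h i)"
        using sum.remove[OF Suc.prems(2) i0(1)] I'_def by simp
      also have "(\<Sum>i\<in>I'. c i * h i) = (\<Sum>i\<in>I'. g i0 * d i * h i)"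
        by (rule sum.cong) (auto simp: c_def I'_def)
      finally show ?thesis
        by (simp add: c_def right_diff_distrib sum_subtractf sum_distrib_left sum_distrib_right algebra_simps)
    qed
    show ?thesis
    proof (rule exI[of _ c], intro conjI)
      show "\<forall>i. i \<notin> I \<longrightarrow> c i = 0" using d(1) i0 by (auto simp: c_def I'_def)
      show "\<exists>i\<in>I. c i \<noteq> 0" using d(2) i0 by (auto simp: c_def I'_def)
      show "\<forall>h\<in>set hs. (\<Sum>i\<in>I. c i * h i) = 0"
      proof
        fix h assume "h \<in> set hs"
        then have "h = g \<or> h \<in> set hs'" using hs by auto
        then show "(\<Sum>i\<in>I. c i * h i) = 0"
        proof
          assume "h = g" then show ?thesis by (simp add: key algebra_simps)
        next
          assume "h \<in> set hs'"
          then have "(\<Sum>i\<in>I'. d i * (g i0 * h i - g i * h i0)) = 0" using d(3) by auto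
          then show ?thesis by (simp add: key)
        qed
      qed
    qed
  qed
qed

definition LL :: "nat \<Rightarrow> int list" where "LL n = from_nat n"
definition phi :: "nat \<Rightarrow> (nat \<Rightarrow> int) \<Rightarrow> int" where
  "phi n x = (\<Sum>i<length (LL n). LL n ! i * x i)"
definition XX :: "(nat \<Rightarrow> int) \<Rightarrow> nat set" where "XX g = {n. phi n g = 0}"
definition YY :: "nat \<Rightarrow> nat set" where
  "YY m = {n. (\<forall>i<length (LL n). i < m \<longrightarrow> LL n ! i = 0) \<and> (\<exists>i<length (LL n). LL n ! i \<noteq> 0)}"

lemma YY_mono: "m \<le> m' \<Longrightarrow> YY m' \<subseteq> YY m"
  unfolding YY_def by auto

lemma inter_infinite:
  assumes "finite E" "E \<subseteq> XX ` G \<union> range YY"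
  shows "infinite (\<Inter>E)"
proof -
  obtain E1 where E1: "E1 \<subseteq> G" "finite E1" "XX ` E1 = E \<inter> XX ` G"
    by (metis assms(1) finite_Int finite_subset_image inf.cobounded2)
  obtain E2 where E2: "finite E2" "YY ` E2 = E \<inter> range YY"
    by (metis assms(1) finite_Int finite_subset_image inf.cobounded2)
  define M where "M = Max (insert 0 E2)"
  have M: "m \<in> E2 \<Longrightarrow> m \<le> M" for m using E2 M_def by auto
  obtain hs where hs: "set hs = E1" using E1 finite_list by blast
  define r where "r = length hs"
  have "\<exists>c::nat\<Rightarrow>int. (\<forall>i. i\<notin>{M..M+r} \<longrightarrow> c i = 0) \<and> (\<exists>i\<in>{M..M+r}. c i \<noteq> 0)
     \<and> (\<forall>h\<in>set hs. (\<Sum>i\<in>{M..M+r}. c i * h i) = 0)"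
    by (rule hom_sol_n) (auto simp: r_def)
  then obtain c where c: "\<forall>i. i\<notin>{M..M+r} \<longrightarrow> c i = 0" "\<exists>i\<in>{M..M+r}. c i \<noteq> 0"
     "\<forall>h\<in>E1. (\<Sum>i\<in>{M..M+r}. c i * h i) = 0" using hs by auto
  define Ls where "Ls t = map c [0..<Suc (M+r)] @ replicate t 0" for t
  have lenLs: "length (Ls t) = Suc (M+r) + t" for t by (simp add: Ls_def)
  have nthLs: "Ls t ! i = c i" if "i < length (Ls t)" for i t
    using that
  proof (cases "i < Suc (M+r)")
    case True then show ?thesis by (simp add: Ls_def nth_append del: upt_Suc)
  next
    case False
    moreover assume "i < length (Ls t)"
    ultimately show ?thesis using c(1) by (simp add: Ls_def nth_append lenLs del: upt_Suc)
  qed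
  have "inj (\<lambda>t. to_nat (Ls t))"
    by (rule injI) (metis lenLs add_left_cancel from_nat_to_nat)
  then have inf: "infinite (range (\<lambda>t. to_nat (Ls t)))"
    using finite_imageD by blast
  have sumLs: "(\<Sum>i<length (Ls t). Ls t ! i * x i) = (\<Sum>i\<in>{M..M+r}. c i * x i)" for t x
  proof -
    have "(\<Sum>i<length (Ls t). Ls t ! i * x i) = (\<Sum>i<length (Ls t). c i * x i)"
      by (rule sum.cong) (auto simp: nthLs)
    also have "\<dots> = (\<Sum>i\<in>{M..M+r}. c i * x i)"
      by (rule sum.mono_neutral_right) (use c(1) lenLs in auto)
    finally show ?thesis .
  qed
  have "range (\<lambda>t. to_nat (Ls t)) \<subseteq> \<Inter>E"
  proof (clarify)
    fix t X assume X: "X \<in> E"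
    then have "X \<in> XX ` G \<or> X \<in> range YY" using assms by auto
    then show "to_nat (Ls t) \<in> X"
    proof
      assume "X \<in> XX ` G"
      then obtain g where g: "g \<in> E1" "X = XX g" using E1 X by (metis IntI imageE)
      show ?thesis using g c(3) by (simp add: XX_def phi_def LL_def sumLs)
    next
      assume "X \<in> range YY"
      then obtain m where m: "m \<in> E2" "X = YY m" using E2 X by (metis IntI imageE)
      have "\<forall>i<length (Ls t). i < m \<longrightarrow> Ls t ! i = 0" using M[OF m(1)] c(1) nthLs by auto
      moreover have "\<exists>i<length (Ls t). Ls t ! i \<noteq> 0" using c(2) nthLs lenLs
        by (metis atLeastAtMost_iff le_imp_less_Suc trans_less_add1)
      ultimately show ?thesis using m by (simp add: YY_def LL_def)
    qed
  qed
  then show ?thesis using inf finite_subset by blast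
qed


theorem theorem9:
  fixes G :: "(nat \<Rightarrow> int) set"
  assumes "is_subgroup G"
    and "fin_supp_seqs \<subseteq> G"
    and "card_below_p G"
  shows "\<exists>f. is_endo f \<and> f ` G \<subseteq> fin_supp_seqs \<and> infinite_rank (f ` fin_supp_seqs)"
proof -
  define F where "F = XX ` G \<union> range YY"
  have sfip: "has_sfip F" unfolding has_sfip_def F_def using inter_infinite by blast
  define e where "e j = (\<lambda>n::nat. if n = j then 1 else (0::int))" for j
  have e_fin: "e j \<in> fin_supp_seqs" for j by (simp add: e_def fin_supp_seqs_def)
  have "inj e" by (rule injI) (metis e_def one_neq_zero)
  then have infG: "infinite G" using e_fin assms(2)
    by (metis finite_imageD finite_subset image_subsetI infinite_UNIV_nat)
  have "(card_of F, card_of G) \<in> ordLeq"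
    unfolding F_def
  proof (rule card_of_Un_ordLeq_infinite_Field)
    show "\<not> finite (Field (card_of G))" using infG by (simp add: Field_card_of)
    show "(card_of (XX ` G), card_of G) \<in> ordLeq" by (rule card_of_image)
    show "(card_of (range YY), card_of G) \<in> ordLeq"
      using card_of_image[of YY UNIV] infG infinite_iff_card_of_nat ordLeq_transitive by blast
    show "Card_order (card_of G)" by (rule card_of_Card_order)
  qed
  then have "has_pseudointersection F"
    using assms(3) sfip not_ordLess_ordLeq unfolding card_below_p_def by blast
  then obtain A where A: "infinite A" "\<And>X. X \<in> F \<Longrightarrow> finite (A - X)"
    unfolding has_pseudointersection_def by blast
  have AX: "finite (A - XX g)" if "g \<in> G" for g using A(2) that F_def by auto
  have AY: "infinite (A \<inter> YY m)" for m
  proof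
    assume "finite (A \<inter> YY m)"
    moreover have "finite (A - YY m)" using A(2) F_def by auto
    ultimately have "finite ((A \<inter> YY m) \<union> (A - YY m))" by simp
    moreover have "(A \<inter> YY m) \<union> (A - YY m) = A" by auto
    ultimately show False using A(1) by simp
  qed
  define nxt where "nxt m p = (LEAST n. n \<in> A \<inter> YY m \<and> p < n)" for m p
  have nxt: "nxt m p \<in> A \<inter> YY m \<and> p < nxt m p" for m p
  proof -
    obtain n where "n \<in> A \<inter> YY m" "p < n"
      using AY[of m] infinite_nat_iff_unbounded by blast
    then show ?thesis unfolding nxt_def by (metis (mono_tags, lifting) LeastI)
  qed
  define s where "s = rec_nat (nxt 0 0) (\<lambda>k sk. nxt (length (LL sk)) sk)"
  have s0: "s 0 = nxt 0 0" and sS: "s (Suc k) = nxt (length (LL (s k))) (s k)" for k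
    by (simp_all add: s_def)
  define l where "l k = length (LL (s k))" for k
  have sA: "s k \<in> A" for k by (cases k) (use nxt s0 sS in auto)
  have smono: "strict_mono s" unfolding strict_mono_Suc_iff using nxt sS by auto
  have sY: "s (Suc k) \<in> YY (l k)" for k using nxt sS l_def by auto
  have sY0: "s k \<in> YY 0" for k by (metis YY_mono le0 subsetD s0 nxt IntE sY old.nat.exhaust)
  have lmono: "l k < l (Suc k)" for k
  proof -
    from sY[of k] obtain i where "i < l (Suc k)" "LL (s (Suc k)) ! i \<noteq> 0"
      "\<forall>i<l (Suc k). i < l k \<longrightarrow> LL (s (Suc k)) ! i = 0"
      unfolding YY_def l_def by auto
    then show ?thesis by (meson not_le order.strict_trans1)
  qed
  have lsm: "strict_mono l" unfolding strict_mono_Suc_iff using lmono by (rule allI)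
  have zero_below: "LL (s j) ! i = 0" if "k < j" "i < l k" "i < l j" for i j k
  proof -
    have "0 < j" using that(1) by simp
    then obtain j' where j': "j = Suc j'" using gr0_conv_Suc by blast
    have "k \<le> j'" using that(1) j' by simp
    then have "l k \<le> l j'" using lsm by (simp add: strict_mono_less_eq)
    then have "i < l j'" using that(2) by simp
    moreover have "\<forall>i<l j. i < l j' \<longrightarrow> LL (s j) ! i = 0"
      using sY[of j'] j' unfolding YY_def l_def by simp
    ultimately show ?thesis using that(3) by simp
  qed
  have "\<exists>i<l k. LL (s k) ! i \<noteq> 0" for k using sY0[of k] unfolding YY_def l_def by auto
  then obtain ii where ii: "\<And>k. ii k < l k" "\<And>k. LL (s k) ! ii k \<noteq> 0" by metis
  define f where "f x = (\<lambda>k. phi (s k) x)" for x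
  have endo: "is_endo f"
    unfolding is_endo_def f_def phi_def by (simp add: distrib_left sum.distrib)
  have fG: "f ` G \<subseteq> fin_supp_seqs"
  proof clarify
    fix g assume g: "g \<in> G"
    have "{k. f g k \<noteq> 0} \<subseteq> s -` (A - XX g)" using sA by (auto simp: f_def XX_def)
    moreover have "finite (s -` (A - XX g))"
      using AX[OF g] smono by (simp add: finite_vimageI strict_mono_imp_inj_on)
    ultimately show "f g \<in> fin_supp_seqs" unfolding fin_supp_seqs_def using finite_subset by auto
  qed
  define v where "v k = f (e (ii k))" for k
  have fe: "f (e j) k = (if j < l k then LL (s k) ! j else 0)" for j k
  proof -
    have "f (e j) k = (\<Sum>i<l k. LL (s k) ! i * e j i)" by (simp add: f_def phi_def l_def)
    also have "\<dots> = (if j < l k then LL (s k) ! j else 0)"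
      by (simp add: e_def if_distrib[of "\<lambda>x. _ * x"] sum.delta cong: if_cong)
    finally show ?thesis .
  qed
  have vkk: "v k k \<noteq> 0" for k using ii fe v_def by simp
  have vjk: "v k j = 0" if "j \<noteq> k" for j k
  proof (cases "j < k")
    case True
    then obtain k' where k': "k = Suc k'" "j \<le> k'" by (cases k) auto
    have "l j \<le> l k'" using k' lsm by (simp add: strict_mono_less_eq)
    moreover have "\<not> ii k < l k'"
      using sY[of k'] ii[of k] k' unfolding YY_def l_def by auto
    ultimately have "l j \<le> ii k" by simp
    then show ?thesis using fe v_def by simp
  next
    case False
    then have "k < j" using that by simp
    moreover have "ii k < l k" by (rule ii)
    ultimately show ?thesis using fe v_def zero_below by simp
  qed
  have "infinite_rank (f ` fin_supp_seqs)"
    unfolding infinite_rank_def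
  proof (intro exI conjI)
    show "range v \<subseteq> f ` fin_supp_seqs" using e_fin v_def by auto
    have "inj v" by (rule injI) (metis vkk vjk)
    then show "infinite (range v)" using finite_imageD by blast
    show "int_lin_indep (range v)"
      unfolding int_lin_indep_def
    proof (intro allI impI ballI)
      fix T c x
      assume T: "finite T" "T \<subseteq> range v" "(\<lambda>n. \<Sum>x\<in>T. c x * x n) = (\<lambda>n. 0)" "x \<in> T"
      then obtain k where k: "x = v k" by auto
      have "(\<Sum>y\<in>T. c y * y k) = 0" using fun_cong[OF T(3), of k] by simp
      moreover have "(\<Sum>y\<in>T. c y * y k) = c x * x k"
      proof -
        have "(\<Sum>y\<in>T. c y * y k) = c x * x k + (\<Sum>y\<in>T - {x}. c y * y k)"
          using sum.remove[OF T(1) T(4)] by simp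
        moreover have "(\<Sum>y\<in>T - {x}. c y * y k) = 0"
        proof (rule sum.neutral, rule ballI)
          fix y assume "y \<in> T - {x}"
          then obtain j where "y = v j" "j \<noteq> k" using T(2) k by auto
          then show "c y * y k = 0" using vjk by simp
        qed
        ultimately show ?thesis by simp
      qed
      ultimately show "c x = 0" using vkk k by simp
    qed
  qed
  then show ?thesis using endo fG by (intro exI[of _ f] conjI)
qed

end
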